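(* Let $\mathbf{u}$ be an $m$-dimensional unit vector with entries in $\mathcal{R}_{12}$ with $\mathrm{lde}(\mathbf{u})\geq 1$. Then there exists a sequence $G_1,\ldots,G_q$ of one-level operators of type $\zeta_{12}$ and two-level operators of type $X$ and $H'$ such that $\mathrm{lde}(G_1\cdots G_q\mathbf{u})<\mathrm{lde}(\mathbf{u})$.
   Context: $\zeta_{12}=e^{2\pi i/12}$, $\mathcal{R}_{12}$ is the smallest subring of $\mathbb{C}$ containing $1/2$ and $\zeta_{12}$, and $\mathbb{Z}[\zeta_{12}]$ the smallest subring containing $\zeta_{12}$. Let $\delta=1+i$. For a vector $\mathbf{u}$ over $\mathcal{R}_{12}$, $\mathrm{lde}(\mathbf{u})$ is the smallest $\ell\in\mathbb{N}$ such that $\delta^\ell\mathbf{u}$ has all entries in $\mathbb{Z}[\zeta_{12}]$. $X=\begin{bmatrix}0&1\\1&0\end{bmatrix}$, $H'=\frac{1+i}{2}\begin{bmatrix}1&1\\1&-1\end{bmatrix}$. The one-level operator $c_{[j]}$ of type $c$ is the $m\times m$ identity with $(j,j)$ entry replaced by $c$; the two-level operator $M_{[j,j']}$ ($j<j'$) of type $M\in\mathrm{M}_2(\mathbb{C})$ is the $m\times m$ identity with entries at $(j,j),(j,j'),(j',j),(j',j')$ replaced by $M_{1,1},M_{1,2},M_{2,1},M_{2,2}$. *)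

theory Defs
  imports Complex_Main "Jordan_Normal_Form.Matrix"
begin

definition zeta12 :: complex where
  "zeta12 = exp (2 * pi * \<i> / 12)"

inductive_set Zzeta12 :: "complex set" where
  one: "1 \<in> Zzeta12"
| gen: "zeta12 \<in> Zzeta12"
| add: "x \<in> Zzeta12 \<Longrightarrow> y \<in> Zzeta12 \<Longrightarrow> x + y \<in> Zzeta12"
| neg: "x \<in> Zzeta12 \<Longrightarrow> - x \<in> Zzeta12"
| mult: "x \<in> Zzeta12 \<Longrightarrow> y \<in> Zzeta12 \<Longrightarrow> x * y \<in> Zzeta12"

inductive_set R12 :: "complex set" where
  one: "1 \<in> R12"
| half: "1/2 \<in> R12"
| gen: "zeta12 \<in> R12"
| add: "x \<in> R12 \<Longrightarrow> y \<in> R12 \<Longrightarrow> x + y \<in> R12"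
| neg: "x \<in> R12 \<Longrightarrow> - x \<in> R12"
| mult: "x \<in> R12 \<Longrightarrow> y \<in> R12 \<Longrightarrow> x * y \<in> R12"

definition delta :: complex where
  "delta = 1 + \<i>"

definition lde :: "complex vec \<Rightarrow> nat" where
  "lde u = (LEAST l. \<forall>i < dim_vec u. delta ^ l * u $ i \<in> Zzeta12)"

definition is_unit_vector :: "complex vec \<Rightarrow> bool" where
  "is_unit_vector u \<longleftrightarrow> (\<Sum>i<dim_vec u. (cmod (u $ i))\<^sup>2) = 1"

definition Xmat :: "complex mat" where
  "Xmat = mat_of_rows_list 2 [[0, 1], [1, 0]]"

definition Hprime :: "complex mat" where
  "Hprime = ((1 + \<i>) / 2) \<cdot>\<^sub>m mat_of_rows_list 2 [[1, 1], [1, -1]]"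

text \<open>one-level operator c_[j] (0-based indices j < m)\<close>
definition one_level :: "nat \<Rightarrow> complex \<Rightarrow> nat \<Rightarrow> complex mat" where
  "one_level m c j = mat m m (\<lambda>(a, b). if a = b then (if a = j then c else 1) else 0)"

text \<open>two-level operator M_[j,j'] (0-based indices, j < j' < m)\<close>
definition two_level :: "nat \<Rightarrow> complex mat \<Rightarrow> nat \<Rightarrow> nat \<Rightarrow> complex mat" where
  "two_level m M j j' = mat m m (\<lambda>(a, b).
     if a = j \<and> b = j then M $$ (0, 0)
     else if a = j \<and> b = j' then M $$ (0, 1)
     else if a = j' \<and> b = j then M $$ (1, 0)
     else if a = j' \<and> b = j' then M $$ (1, 1)
     else if a = b then 1 else 0)"

definition allowed_op :: "nat \<Rightarrow> complex mat \<Rightarrow> bool" where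
  "allowed_op m G \<longleftrightarrow>
     (\<exists>j < m. G = one_level m zeta12 j) \<or>
     (\<exists>j j'. j < j' \<and> j' < m \<and> (G = two_level m Xmat j j' \<or> G = two_level m Hprime j j'))"

end

theory Submission
  imports Defs "HOL-Computational_Algebra.Primes"
begin

lemma zeta_eq: "zeta12 = Complex (sqrt 3 / 2) (1/2)"
proof -
  have "2 * pi * \<i> / 12 = \<i> * complex_of_real (pi/6)" by (simp add: field_simps)
  then show ?thesis unfolding zeta12_def by (simp add: exp_eq_polar cos_30 sin_30 Complex_eq cis.ctr)
qed

lemma zeta2: "zeta12 ^ 2 = Complex (1/2) (sqrt 3 / 2)"
  by (simp add: zeta_eq power2_eq_square complex_eq_iff)

lemma zeta3: "zeta12 ^ 3 = \<i>"
proof -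
  have "zeta12 ^ 3 = zeta12^2 * zeta12" by (simp add: power3_eq_cube power2_eq_square)
  also have "\<dots> = \<i>" unfolding zeta2 unfolding zeta_eq by (simp add: complex_eq_iff)
  finally show ?thesis .
qed

lemma zeta4: "zeta12 ^ 4 = zeta12^2 - 1"
proof -
  have "zeta12 ^ 4 = zeta12^3 * zeta12" by (simp add: power_Suc2 numeral_eq_Suc del: power_Suc)
  also have "\<dots> = zeta12^2 - 1" unfolding zeta3 zeta2 unfolding zeta_eq by (simp add: complex_eq_iff)
  finally show ?thesis .
qed

lemma sqrt3_irr: fixes p q :: int assumes "of_int p + of_int q * sqrt 3 = 0" shows "q = 0"
proof (rule ccontr)
  assume q: "q \<noteq> 0"
  have "(of_int p)^2 = (of_int q * sqrt 3)^2"
    using assms by (metis add_eq_0_iff power2_minus)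
  then have "real_of_int (p^2) = real_of_int (3 * q^2)" by (simp add: power_mult_distrib)
  then have eq: "p^2 = 3 * q^2" by linarith
  have "\<forall>p q::int. q \<noteq> 0 \<longrightarrow> nat \<bar>q\<bar> = n \<longrightarrow> p^2 \<noteq> 3 * q^2" for n
  proof (induction n rule: less_induct)
    case (less n)
    show ?case
    proof (intro allI impI notI)
      fix p q :: int assume h: "q \<noteq> 0" "nat \<bar>q\<bar> = n" "p^2 = 3 * q^2"
      have p3: "prime (3::int)" by simp
      have "(3::int) dvd p^2" using h by simp
      then have "(3::int) dvd p" using p3 prime_dvd_power by blast
      then obtain p' where p': "p = 3 * p'" by blast
      then have "q^2 = 3 * p'^2" using h by (simp add: power_mult_distrib)
      then have "(3::int) dvd q" using p3 prime_dvd_power by (metis dvd_triv_left)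
      then obtain q' where q': "q = 3 * q'" by blast
      have "p'^2 = 3 * q'^2" using \<open>q^2 = 3 * p'^2\<close> q' by (simp add: power_mult_distrib)
      moreover have "q' \<noteq> 0" using h q' by simp
      moreover have "nat \<bar>q'\<bar> < n" using h q' \<open>q' \<noteq> 0\<close> by (simp add: abs_mult)
      ultimately show False using less by blast
    qed
  qed
  then show False using q eq by blast
qed

abbreviation Z where "Z \<equiv> Zzeta12"
abbreviation zz where "zz \<equiv> zeta12"

lemma Z_add: "x \<in> Z \<Longrightarrow> y \<in> Z \<Longrightarrow> x + y \<in> Z" by (rule Zzeta12.add)
lemma Z_mult: "x \<in> Z \<Longrightarrow> y \<in> Z \<Longrightarrow> x * y \<in> Z" by (rule Zzeta12.mult)
lemma Z_neg: "x \<in> Z \<Longrightarrow> - x \<in> Z" by (rule Zzeta12.neg)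
lemma Z_diff: "x \<in> Z \<Longrightarrow> y \<in> Z \<Longrightarrow> x - y \<in> Z"
  by (metis Z_add Z_neg diff_conv_add_uminus)
lemma Z_one: "1 \<in> Z" by (rule Zzeta12.one)
lemma Z_zero: "0 \<in> Z" using Z_diff[OF Z_one Z_one] by simp
lemma Z_gen: "zz \<in> Z" by (rule Zzeta12.gen)
lemma Z_pow: "x \<in> Z \<Longrightarrow> x ^ n \<in> Z"
proof (induction n)
  case 0 show ?case using Z_one by simp
next
  case (Suc n) then show ?case using Z_mult[OF _ Suc.IH] by simp
qed
lemma Z_of_nat: "of_nat n \<in> Z"
proof (induction n)
  case 0 show ?case using Z_zero by simp
next
  case (Suc n) then show ?case using Z_add[OF Z_one Suc.IH] by simp
qed
lemma Z_of_int: "of_int n \<in> Z"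
proof (cases "n \<ge> 0")
  case True then show ?thesis using Z_of_nat[of "nat n"] by simp
next
  case False then show ?thesis using Z_neg[OF Z_of_nat[of "nat (-n)"]] by simp
qed
lemma Z_numeral: "numeral n \<in> Z" using Z_of_nat[of "numeral n"] by simp
lemma Z_i: "\<i> \<in> Z" using Z_pow[OF Z_gen, of 3] zeta3 by simp
lemma Z_delta: "delta \<in> Z" unfolding delta_def by (intro Z_add Z_one Z_i)

lemmas Zcl = Z_add Z_mult Z_neg Z_diff Z_one Z_zero Z_gen Z_pow Z_of_nat Z_of_int Z_numeral Z_i Z_delta



lemma zeta12_pow: "zz ^ 12 = 1"
proof -
  have "zz ^ 12 = (zz^3)^4" using power_mult[of zz 3 4] power_mult[of zz 3 2] by simp
  then show ?thesis by (simp add: zeta3)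
qed

lemma zeta6: "zz ^ 6 = -1"
proof -
  have "zz ^ 6 = (zz^3)^2" using power_mult[of zz 3 4] power_mult[of zz 3 2] by simp
  then show ?thesis by (simp add: zeta3)
qed

lemma cnj_zeta: "cnj zz = zz ^ 11"
proof -
  have n: "zz * cnj zz = 1" unfolding zeta_eq by (simp add: complex_eq_iff power2_eq_square)
  have "zz * zz^11 = 1" using zeta12_pow by (simp add: power_Suc[symmetric] del: power_Suc)
  then show ?thesis using n by (metis mult.commute mult.left_neutral mult.assoc)
qed

lemma Z_cnj: "x \<in> Z \<Longrightarrow> cnj x \<in> Z"
proof (induction rule: Zzeta12.induct)
  case gen then show ?case by (simp add: cnj_zeta Zcl)
qed (auto intro: Zcl)

lemma mulred:
  fixes x a b c d e f g h :: "'a::comm_ring_1"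
  assumes "x^4 = x^2 - 1"
  shows "(a + b*x + c*x^2 + d*x^3) * (e + f*x + g*x^2 + h*x^3) =
     (a*e - (b*h+c*g+d*f) - d*h) + ((a*f+b*e) - (c*h+d*g))*x +
          ((a*g+b*f+c*e) + (b*h+c*g+d*f))*x^2 + ((a*h+b*g+c*f+d*e) + (c*h+d*g))*x^3"
proof -
  have "(a + b*x + c*x^2 + d*x^3) * (e + f*x + g*x^2 + h*x^3) -
     ((a*e - (b*h+c*g+d*f) - d*h) + ((a*f+b*e) - (c*h+d*g))*x +
          ((a*g+b*f+c*e) + (b*h+c*g+d*f))*x^2 + ((a*h+b*g+c*f+d*e) + (c*h+d*g))*x^3)
     = (x^4 - x^2 + 1) * (d*h*x^2 + (c*h+d*g)*x + (b*h+c*g+d*f+d*h))"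
    by (simp add: algebra_simps power2_eq_square power3_eq_cube power4_eq_xxxx)
  then show ?thesis using assms by simp
qed

definition rep :: "int \<Rightarrow> int \<Rightarrow> int \<Rightarrow> int \<Rightarrow> complex" where
  "rep a b c d = of_int a + of_int b * zz + of_int c * zz^2 + of_int d * zz^3"

lemma rep_Z: "rep a b c d \<in> Z" unfolding rep_def by (intro Zcl)

lemma Z_rep: "x \<in> Z \<Longrightarrow> \<exists>a b c d. x = rep a b c d"
proof (induction rule: Zzeta12.induct)
  case one then show ?case by (rule exI[of _ 1], rule exI[of _ 0], rule exI[of _ 0], rule exI[of _ 0]) (simp add: rep_def)
next
  case gen then show ?case by (rule exI[of _ 0], rule exI[of _ 1], rule exI[of _ 0], rule exI[of _ 0]) (simp add: rep_def)
next
  case (add x y)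
  then obtain a b c d e f g h where "x = rep a b c d" "y = rep e f g h" by blast
  then have "x + y = rep (a+e) (b+f) (c+g) (d+h)" by (simp add: rep_def algebra_simps)
  then show ?case by blast
next
  case (neg x)
  then obtain a b c d where "x = rep a b c d" by blast
  then have "- x = rep (-a) (-b) (-c) (-d)" by (simp add: rep_def algebra_simps)
  then show ?case by blast
next
  case (mult x y)
  then obtain a b c d e f g h where xy: "x = rep a b c d" "y = rep e f g h" by blast
  have z4: "zz^4 = zz^2 - 1" by (rule zeta4)
  have "x * y = rep (a*e - (b*h+c*g+d*f) - d*h) ((a*f+b*e) - (c*h+d*g))
          ((a*g+b*f+c*e) + (b*h+c*g+d*f)) ((a*h+b*g+c*f+d*e) + (c*h+d*g))"
    unfolding xy rep_def mulred[OF z4] by simp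
  then show ?case by blast
qed

lemma Re_rep: "Re (rep a b c d) = a + c/2 + b * sqrt 3 / 2"
  unfolding rep_def zeta3 zeta2 unfolding zeta_eq by simp
lemma Im_rep: "Im (rep a b c d) = b/2 + c * sqrt 3 / 2 + d"
  unfolding rep_def zeta3 zeta2 unfolding zeta_eq by simp

definition cls0 :: "complex \<Rightarrow> bool" where
  "cls0 x \<longleftrightarrow> (\<exists>w\<in>Z. x = delta * w)"
definition clsE :: "complex \<Rightarrow> complex \<Rightarrow> bool" where
  "clsE e x \<longleftrightarrow> (\<exists>r y. y \<in> Z \<and> x = zz^r * e + 2 * y)"
definition eB :: complex where "eB = rep 0 (-1) 1 0"

lemma rep_add: "rep a b c d + rep e f g h = rep (a+e) (b+f) (c+g) (d+h)"
  by (simp add: rep_def algebra_simps)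
lemma rep_2: "2 * rep a b c d = rep (2*a) (2*b) (2*c) (2*d)"
  by (simp add: rep_def algebra_simps)
lemma rep_mult: "rep a b c d * rep e f g h = rep (a*e - (b*h+c*g+d*f) - d*h) ((a*f+b*e) - (c*h+d*g))
          ((a*g+b*f+c*e) + (b*h+c*g+d*f)) ((a*h+b*g+c*f+d*e) + (c*h+d*g))"
  unfolding rep_def mulred[OF zeta4] by simp
lemma delta_rep: "delta = rep 1 0 0 1" by (simp add: rep_def delta_def zeta3)
lemma zp0: "zz^0 = rep 1 0 0 0" by (simp add: rep_def)
lemma zp1: "zz^1 = rep 0 1 0 0" by (simp add: rep_def)
lemma zp2: "zz^2 = rep 0 0 1 0" by (simp add: rep_def)
lemma zp3: "zz^3 = rep 0 0 0 1" by (simp add: rep_def)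
lemma zp4: "zz^4 = rep (-1) 0 1 0" by (simp add: rep_def zeta4)
lemma zp5: "zz^5 = rep 0 (-1) 0 1"
proof -
  have "zz^5 = zz^4 * zz^1" using power_add[of zz 4 1] by simp
  then show ?thesis unfolding zp4 zp1 rep_mult by simp
qed

lemma clsE_I: "x = p * e + 2 * y \<Longrightarrow> p = zz^r \<Longrightarrow> y \<in> Z \<Longrightarrow> clsE e x"
  unfolding clsE_def by blast
lemma cls0_I: "x = delta * w \<Longrightarrow> w \<in> Z \<Longrightarrow> cls0 x"
  unfolding cls0_def by blast

lemma sc_0000: "cls0 (rep (0) (0) (0) (0)) \<or> clsE 1 (rep (0) (0) (0) (0)) \<or> clsE eB (rep (0) (0) (0) (0))"
  by (rule disjI1, rule cls0_I[of _ "(rep (0) (0) (0) (0))"]) (simp_all add: delta_rep rep_mult rep_Z)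

lemma sc_0001: "cls0 (rep (0) (0) (0) (1)) \<or> clsE 1 (rep (0) (0) (0) (1)) \<or> clsE eB (rep (0) (0) (0) (1))"
  by (rule disjI2, rule disjI1, rule clsE_I[OF _ zp3[symmetric], of _ _ "(rep (0) (0) (0) (0))"]) (simp_all add: rep_add rep_2 rep_Z)

lemma sc_0010: "cls0 (rep (0) (0) (1) (0)) \<or> clsE 1 (rep (0) (0) (1) (0)) \<or> clsE eB (rep (0) (0) (1) (0))"
  by (rule disjI2, rule disjI1, rule clsE_I[OF _ zp2[symmetric], of _ _ "(rep (0) (0) (0) (0))"]) (simp_all add: rep_add rep_2 rep_Z)

lemma sc_0011: "cls0 (rep (0) (0) (1) (1)) \<or> clsE 1 (rep (0) (0) (1) (1)) \<or> clsE eB (rep (0) (0) (1) (1))"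
  by (rule disjI2, rule disjI2, rule clsE_I[OF _ zp1[symmetric], of _ _ "(rep (0) (0) (1) (0))"]) (simp_all add: eB_def rep_mult rep_add rep_2 rep_Z)

lemma sc_0100: "cls0 (rep (0) (1) (0) (0)) \<or> clsE 1 (rep (0) (1) (0) (0)) \<or> clsE eB (rep (0) (1) (0) (0))"
  by (rule disjI2, rule disjI1, rule clsE_I[OF _ zp1[symmetric], of _ _ "(rep (0) (0) (0) (0))"]) (simp_all add: rep_add rep_2 rep_Z)

lemma sc_0101: "cls0 (rep (0) (1) (0) (1)) \<or> clsE 1 (rep (0) (1) (0) (1)) \<or> clsE eB (rep (0) (1) (0) (1))"
  by (rule disjI2, rule disjI1, rule clsE_I[OF _ zp5[symmetric], of _ _ "(rep (0) (1) (0) (0))"]) (simp_all add: rep_add rep_2 rep_Z)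

lemma sc_0110: "cls0 (rep (0) (1) (1) (0)) \<or> clsE 1 (rep (0) (1) (1) (0)) \<or> clsE eB (rep (0) (1) (1) (0))"
  by (rule disjI2, rule disjI2, rule clsE_I[OF _ zp0[symmetric], of _ _ "(rep (0) (1) (0) (0))"]) (simp_all add: eB_def rep_mult rep_add rep_2 rep_Z)

lemma sc_0111: "cls0 (rep (0) (1) (1) (1)) \<or> clsE 1 (rep (0) (1) (1) (1)) \<or> clsE eB (rep (0) (1) (1) (1))"
  by (rule disjI1, rule cls0_I[of _ "(rep (1) (1) (0) (0))"]) (simp_all add: delta_rep rep_mult rep_Z)

lemma sc_1000: "cls0 (rep (1) (0) (0) (0)) \<or> clsE 1 (rep (1) (0) (0) (0)) \<or> clsE eB (rep (1) (0) (0) (0))"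
  by (rule disjI2, rule disjI1, rule clsE_I[OF _ zp0[symmetric], of _ _ "(rep (0) (0) (0) (0))"]) (simp_all add: rep_add rep_2 rep_Z)

lemma sc_1001: "cls0 (rep (1) (0) (0) (1)) \<or> clsE 1 (rep (1) (0) (0) (1)) \<or> clsE eB (rep (1) (0) (0) (1))"
  by (rule disjI1, rule cls0_I[of _ "(rep (1) (0) (0) (0))"]) (simp_all add: delta_rep rep_mult rep_Z)

lemma sc_1010: "cls0 (rep (1) (0) (1) (0)) \<or> clsE 1 (rep (1) (0) (1) (0)) \<or> clsE eB (rep (1) (0) (1) (0))"
  by (rule disjI2, rule disjI1, rule clsE_I[OF _ zp4[symmetric], of _ _ "(rep (1) (0) (0) (0))"]) (simp_all add: rep_add rep_2 rep_Z)

lemma sc_1011: "cls0 (rep (1) (0) (1) (1)) \<or> clsE 1 (rep (1) (0) (1) (1)) \<or> clsE eB (rep (1) (0) (1) (1))"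
  by (rule disjI2, rule disjI2, rule clsE_I[OF _ zp2[symmetric], of _ _ "(rep (1) (0) (0) (1))"]) (simp_all add: eB_def rep_mult rep_add rep_2 rep_Z)

lemma sc_1100: "cls0 (rep (1) (1) (0) (0)) \<or> clsE 1 (rep (1) (1) (0) (0)) \<or> clsE eB (rep (1) (1) (0) (0))"
  by (rule disjI2, rule disjI2, rule clsE_I[OF _ zp5[symmetric], of _ _ "(rep (0) (1) (0) (0))"]) (simp_all add: eB_def rep_mult rep_add rep_2 rep_Z)

lemma sc_1101: "cls0 (rep (1) (1) (0) (1)) \<or> clsE 1 (rep (1) (1) (0) (1)) \<or> clsE eB (rep (1) (1) (0) (1))"
  by (rule disjI2, rule disjI2, rule clsE_I[OF _ zp4[symmetric], of _ _ "(rep (1) (0) (0) (1))"]) (simp_all add: eB_def rep_mult rep_add rep_2 rep_Z)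

lemma sc_1110: "cls0 (rep (1) (1) (1) (0)) \<or> clsE 1 (rep (1) (1) (1) (0)) \<or> clsE eB (rep (1) (1) (1) (0))"
  by (rule disjI1, rule cls0_I[of _ "(rep (1) (1) (0) (-1))"]) (simp_all add: delta_rep rep_mult rep_Z)

lemma sc_1111: "cls0 (rep (1) (1) (1) (1)) \<or> clsE 1 (rep (1) (1) (1) (1)) \<or> clsE eB (rep (1) (1) (1) (1))"
  by (rule disjI2, rule disjI2, rule clsE_I[OF _ zp3[symmetric], of _ _ "(rep (0) (1) (1) (0))"]) (simp_all add: eB_def rep_mult rep_add rep_2 rep_Z)

lemma small_class:
  assumes "a \<in> {0,1}" "b \<in> {0,1}" "c \<in> {0,1}" "d \<in> {0,1}"
  shows "cls0 (rep a b c d) \<or> clsE 1 (rep a b c d) \<or> clsE eB (rep a b c d)"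
proof -
  have "a = 0 \<or> a = 1" "b = 0 \<or> b = 1" "c = 0 \<or> c = 1" "d = 0 \<or> d = 1" using assms by auto
  then show ?thesis by (elim disjE) (simp_all only: sc_0000 sc_0001 sc_0010 sc_0011 sc_0100 sc_0101 sc_0110 sc_0111 sc_1000 sc_1001 sc_1010 sc_1011 sc_1100 sc_1101 sc_1110 sc_1111)
qed

lemma two_delta: "2 = delta * (1 - \<i>)"
  by (simp add: delta_def algebra_simps)

lemma mod2_01: "(a::int) mod 2 \<in> {0,1}" by auto

lemma cls0_shift: "cls0 x \<Longrightarrow> y \<in> Z \<Longrightarrow> cls0 (x + 2 * y)"
  unfolding cls0_def two_delta
  by (metis (no_types, lifting) Z_add Z_diff Z_i Z_mult Z_one distrib_left mult.assoc)

lemma clsE_shift: "clsE e x \<Longrightarrow> y \<in> Z \<Longrightarrow> clsE e (x + 2 * y)"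
  unfolding clsE_def
  by (metis (no_types, lifting) Z_add add.assoc distrib_left)

lemma Z_class: assumes "x \<in> Z" shows "cls0 x \<or> clsE 1 x \<or> clsE eB x"
proof -
  obtain a b c d where x: "x = rep a b c d" using Z_rep assms by blast
  have x2: "x = rep (a mod 2) (b mod 2) (c mod 2) (d mod 2) + 2 * rep (a div 2) (b div 2) (c div 2) (d div 2)"
    unfolding x rep_2 rep_add by simp
  have "cls0 (rep (a mod 2) (b mod 2) (c mod 2) (d mod 2)) \<or> clsE 1 (rep (a mod 2) (b mod 2) (c mod 2) (d mod 2))
     \<or> clsE eB (rep (a mod 2) (b mod 2) (c mod 2) (d mod 2))"
    by (rule small_class) (rule mod2_01)+
  then show ?thesis unfolding x2 using cls0_shift clsE_shift rep_Z by blast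
qed

lemma no_inv_delta: assumes "w \<in> Z" shows "1 \<noteq> delta * w"
proof
  assume h: "1 = delta * w"
  have "delta * ((1 - \<i>)/2) = 1" by (simp add: delta_def field_simps)
  then have w: "w = (1 - \<i>)/2" using h
    by (metis mult.left_commute mult.right_neutral mult_cancel_left zero_neq_one mult_zero_right)
  obtain a b c d where wr: "w = rep a b c d" using Z_rep assms by blast
  have re: "a + c/2 + b * sqrt 3 / 2 = 1/2" using arg_cong[OF wr, of Re] Re_rep w by simp
  have im: "b/2 + c * sqrt 3 / 2 + d = -1/2" using arg_cong[OF wr, of Im] Im_rep w by simp
  have "of_int (2*a + c - 1) + of_int b * sqrt 3 = 0" using re by (simp add: field_simps)
  then have b: "b = 0" by (rule sqrt3_irr)
  have "of_int (b + 2*d + 1) + of_int c * sqrt 3 = 0" using im by (simp add: field_simps)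
  then have c: "c = 0" by (rule sqrt3_irr)
  have "real_of_int (2 * a) = 1" using re b c by simp
  then have "2 * a = 1" by linarith
  then show False by presburger
qed

lemma zpow_inv: "zz^(11*r) * zz^r = 1"
proof -
  have "zz^(11*r) * zz^r = (zz^12)^r" by (simp add: power_add[symmetric] power_mult[symmetric])
  then show ?thesis by (simp add: zeta12_pow)
qed

lemma eB_delta: "eB = 1 + delta * zz^4"
  unfolding eB_def delta_rep zp4 rep_mult by (simp add: rep_def)

lemma cls0_not_clsE: assumes "cls0 x" "e = 1 \<or> e = eB" shows "\<not> clsE e x"
proof
  assume "clsE e x"
  then obtain r y where y: "y \<in> Z" "x = zz^r * e + 2 * y" unfolding clsE_def by blast
  obtain w where w: "w \<in> Z" "x = delta * w" using assms(1) unfolding cls0_def by blast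
  have E: "zz^r * e = delta * (w - (1 - \<i>) * y)" using y w two_delta by (simp add: algebra_simps)
  have "zz^(11*r) * (zz^r * e) = delta * (zz^(11*r) * (w - (1 - \<i>) * y))" unfolding E by (rule mult.left_commute)
  then have e: "e = delta * (zz^(11*r) * (w - (1 - \<i>) * y))" using zpow_inv by (simp add: mult.assoc[symmetric])
  have wZ: "zz^(11*r) * (w - (1 - \<i>) * y) \<in> Z" using w y by (intro Zcl)
  show False using assms(2)
  proof
    assume "e = 1" then show False using e wZ no_inv_delta by blast
  next
    assume "e = eB"
    then have "1 = delta * (zz^(11*r) * (w - (1 - \<i>) * y) - zz^4)" using e eB_delta by (simp add: algebra_simps)
    moreover have "zz^(11*r) * (w - (1 - \<i>) * y) - zz^4 \<in> Z" using wZ by (intro Z_diff Z_pow Z_gen)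
    ultimately show False using no_inv_delta by blast
  qed
qed

lemma cnj_eB: "cnj eB = rep 1 (-1) (-1) 1"
  unfolding eB_def by (simp add: complex_eq_iff Re_rep Im_rep field_simps)

lemma eB_norm: "eB * cnj eB = rep 2 (-2) 0 1"
  unfolding cnj_eB unfolding eB_def rep_mult by simp

lemma parity:
  fixes nA nB :: nat
  assumes "of_nat nA + of_nat nB * (eB * cnj eB) = 2 * t" "t \<in> Z"
  shows "even nA \<and> even nB"
proof -
  obtain a b c d where t: "t = rep a b c d" using Z_rep assms by blast
  have re: "nA + nB * (2 - sqrt 3) = 2 * (a + c/2 + b * sqrt 3 / 2)"
    using arg_cong[OF assms(1), of Re] unfolding eB_norm t by (simp add: Re_rep Im_rep)
  have im: "0 = 2 * (b/2 + c * sqrt 3 / 2 + d)"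
    using arg_cong[OF assms(1), of Im] unfolding eB_norm t by (simp add: Re_rep Im_rep)
  have "of_int (b + 2*d) + of_int c * sqrt 3 = 0" using im by (simp add: field_simps)
  then have c: "c = 0" by (rule sqrt3_irr)
  have "of_int (int nA + 2 * int nB - 2*a - c) + of_int (- int nB - b) * sqrt 3 = 0" using re by (simp add: field_simps)
  then have b: "- int nB - b = 0" by (rule sqrt3_irr)
  then have "of_int (int nA + 2 * int nB - 2*a - c) = (0::real)" 
    using \<open>of_int (int nA + 2 * int nB - 2*a - c) + of_int (- int nB - b) * sqrt 3 = 0\<close> by simp
  then have A: "int nA + 2 * int nB - 2*a - c = 0" by linarith
  have "real_of_int (b + 2*d) = 0" using im c by simp
  then have B: "b + 2 * d = 0" by linarith
  from A B b c show ?thesis by presburger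
qed

lemma sum_one: assumes "finite S" "j \<in> S" "\<forall>b\<in>S. b \<noteq> j \<longrightarrow> f b = 0" shows "sum f S = f j"
proof -
  have "sum f S = f j + sum f (S - {j})" using assms by (simp add: sum.remove)
  moreover have "sum f (S - {j}) = 0" using assms(3) by (intro sum.neutral) auto
  ultimately show ?thesis by simp
qed

lemma sum_two: assumes "finite S" "j \<in> S" "j' \<in> S" "j \<noteq> j'" "\<forall>b\<in>S. b \<noteq> j \<longrightarrow> b \<noteq> j' \<longrightarrow> f b = 0"
  shows "sum f S = f j + f j'"
proof -
  have "sum f S = f j + sum f (S - {j})" using assms by (simp add: sum.remove)
  moreover have "j' \<in> S - {j}" using assms by auto
  then have "sum f (S - {j}) = f j' + sum f (S - {j} - {j'})" using assms(1) by (intro sum.remove) auto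
  moreover have "sum f (S - {j} - {j'}) = 0" using assms(5) by (intro sum.neutral) auto
  ultimately show ?thesis by simp
qed

lemma one_level_carrier: "one_level m c j \<in> carrier_mat m m"
  unfolding one_level_def by simp
lemma two_level_carrier: "two_level m M j j' \<in> carrier_mat m m"
  unfolding two_level_def by simp

lemma one_level_vec:
  assumes v: "v \<in> carrier_vec m" and j: "j < m"
  shows "one_level m c j *\<^sub>v v = vec m (\<lambda>a. if a = j then c * v $ a else v $ a)"
proof (rule eq_vecI)
  show "dim_vec (one_level m c j *\<^sub>v v) = dim_vec (vec m (\<lambda>a. if a = j then c * v $ a else v $ a))"
    unfolding one_level_def by simp
  fix i assume "i < dim_vec (vec m (\<lambda>a. if a = j then c * v $ a else v $ a))"
  then have i: "i < m" by simp
  have "(one_level m c j *\<^sub>v v) $ i = (\<Sum>k\<in>{0..<m}. one_level m c j $$ (i,k) * v $ k)"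
    using i v unfolding one_level_def by (simp add: scalar_prod_def)
  also have "\<dots> = one_level m c j $$ (i,i) * v $ i"
    using i by (intro sum_one) (auto simp: one_level_def)
  also have "\<dots> = (if i = j then c * v $ i else v $ i)" using i by (simp add: one_level_def)
  finally show "(one_level m c j *\<^sub>v v) $ i = vec m (\<lambda>a. if a = j then c * v $ a else v $ a) $ i" using i by simp
qed

lemma two_level_vec:
  assumes v: "v \<in> carrier_vec m" and j: "j < j'" "j' < m"
  shows "two_level m M j j' *\<^sub>v v = vec m (\<lambda>a. if a = j then M$$(0,0) * v$j + M$$(0,1) * v$j'
     else if a = j' then M$$(1,0) * v$j + M$$(1,1) * v$j' else v $ a)" (is "_ = vec m ?f")
proof (rule eq_vecI)
  show "dim_vec (two_level m M j j' *\<^sub>v v) = dim_vec (vec m ?f)"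
    unfolding two_level_def by simp
  fix i assume "i < dim_vec (vec m ?f)"
  then have i: "i < m" by simp
  have "(two_level m M j j' *\<^sub>v v) $ i = (\<Sum>k\<in>{0..<m}. two_level m M j j' $$ (i,k) * v $ k)"
    using i v unfolding two_level_def by (simp add: scalar_prod_def)
  also have "\<dots> = ?f i"
  proof (cases "i = j \<or> i = j'")
    case True
    have "(\<Sum>k\<in>{0..<m}. two_level m M j j' $$ (i,k) * v $ k) =
       two_level m M j j' $$ (i,j) * v $ j + two_level m M j j' $$ (i,j') * v $ j'"
      using i j True by (intro sum_two) (auto simp: two_level_def)
    then show ?thesis using i j True by (auto simp: two_level_def)
  next
    case False
    have "(\<Sum>k\<in>{0..<m}. two_level m M j j' $$ (i,k) * v $ k) = two_level m M j j' $$ (i,i) * v $ i"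
      using i j False by (intro sum_one) (auto simp: two_level_def)
    then show ?thesis using i j False by (auto simp: two_level_def)
  qed
  finally show "(two_level m M j j' *\<^sub>v v) $ i = vec m ?f $ i" using i by simp
qed

lemma Hprime_entries:
  "Hprime $$ (0,0) = (1+\<i>)/2" "Hprime $$ (0,1) = (1+\<i>)/2"
  "Hprime $$ (1,0) = (1+\<i>)/2" "Hprime $$ (1,1) = -(1+\<i>)/2"
  unfolding Hprime_def mat_of_rows_list_def by (auto simp: complex_eq_iff)

definition FF :: "nat \<Rightarrow> complex mat list \<Rightarrow> complex mat" where
  "FF m Gs = foldr (*) Gs (1\<^sub>m m)"

lemma FF_carrier: "\<forall>G\<in>set Gs. G \<in> carrier_mat m m \<Longrightarrow> FF m Gs \<in> carrier_mat m m"
  unfolding FF_def by (induction Gs) auto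

lemma FF_Cons: "FF m (x # xs) = x * FF m xs" by (simp add: FF_def)

lemma FF_append: assumes "\<forall>G\<in>set (xs @ ys). G \<in> carrier_mat m m" "v \<in> carrier_vec m"
  shows "FF m (xs @ ys) *\<^sub>v v = FF m xs *\<^sub>v (FF m ys *\<^sub>v v)"
  using assms
proof (induction xs)
  case Nil
  have "FF m ys \<in> carrier_mat m m" using Nil by (intro FF_carrier) auto
  then have "FF m ys *\<^sub>v v \<in> carrier_vec m" using Nil by auto
  then show ?case by (simp add: FF_def)
next
  case (Cons x xs)
  have c1: "x \<in> carrier_mat m m" using Cons by auto
  have c2: "FF m (xs @ ys) \<in> carrier_mat m m" "FF m xs \<in> carrier_mat m m" "FF m ys \<in> carrier_mat m m"
    using Cons.prems by (auto intro!: FF_carrier)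
  have "FF m ((x # xs) @ ys) *\<^sub>v v = x *\<^sub>v (FF m (xs @ ys) *\<^sub>v v)"
    unfolding append_Cons FF_Cons using c1 c2 Cons.prems by (intro assoc_mult_mat_vec) auto
  also have "\<dots> = x *\<^sub>v (FF m xs *\<^sub>v (FF m ys *\<^sub>v v))" using Cons by simp
  also have "\<dots> = FF m (x # xs) *\<^sub>v (FF m ys *\<^sub>v v)"
    unfolding FF_Cons using c1 c2 Cons.prems by (intro assoc_mult_mat_vec[symmetric]) auto
  finally show ?case .
qed

lemma allowed_carrier: "allowed_op m G \<Longrightarrow> G \<in> carrier_mat m m"
  unfolding allowed_op_def using one_level_carrier two_level_carrier by blast

lemma FF_Cons_vec: assumes "G \<in> carrier_mat m m" "\<forall>G\<in>set Gs. G \<in> carrier_mat m m" "v \<in> carrier_vec m"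
  shows "FF m (G # Gs) *\<^sub>v v = G *\<^sub>v (FF m Gs *\<^sub>v v)"
  unfolding FF_Cons using assms FF_carrier by (intro assoc_mult_mat_vec) auto

lemma FF_rep_one:
  assumes v: "v \<in> carrier_vec m" and j: "j < m"
  shows "FF m (replicate s (one_level m zz j)) *\<^sub>v v = vec m (\<lambda>a. if a = j then zz^s * v $ a else v $ a)"
proof (induction s)
  case 0 then show ?case using v by (auto simp: FF_def)
next
  case (Suc s)
  have "FF m (replicate (Suc s) (one_level m zz j)) *\<^sub>v v = one_level m zz j *\<^sub>v (FF m (replicate s (one_level m zz j)) *\<^sub>v v)"
    using v by (simp only: replicate_Suc, intro FF_Cons_vec) (auto simp: one_level_carrier)
  also have "\<dots> = vec m (\<lambda>a. if a = j then zz^(Suc s) * v $ a else v $ a)"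
    unfolding Suc by (subst one_level_vec) (auto simp: j)
  finally show ?case .
qed

lemma allowed_one: "j < m \<Longrightarrow> allowed_op m (one_level m zz j)"
  unfolding allowed_op_def by blast
lemma allowed_H: "j < j' \<Longrightarrow> j' < m \<Longrightarrow> allowed_op m (two_level m Hprime j j')"
  unfolding allowed_op_def by blast

lemma pair_step:
  assumes v: "v \<in> carrier_vec m" and jj: "j < j'" "j' < m"
    and cj: "clsE e (v$j)" and cj': "clsE e (v$j')" and e: "e \<in> Z"
  shows "\<exists>Gs. (\<forall>G\<in>set Gs. allowed_op m G) \<and> cls0 ((FF m Gs *\<^sub>v v)$j) \<and> cls0 ((FF m Gs *\<^sub>v v)$j')
     \<and> (\<forall>i<m. i \<noteq> j \<longrightarrow> i \<noteq> j' \<longrightarrow> (FF m Gs *\<^sub>v v)$i = v$i)"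
proof -
  obtain r y where ry: "y \<in> Z" "v$j = zz^r * e + 2 * y" using cj unfolding clsE_def by blast
  obtain r' y' where ry': "y' \<in> Z" "v$j' = zz^r' * e + 2 * y'" using cj' unfolding clsE_def by blast
  define s where "s = 11 * r' + r"
  have zs: "zz^s * zz^r' = zz^r"
  proof -
    have "zz^s * zz^r' = (zz^(11*r') * zz^r') * zz^r" unfolding s_def by (simp add: power_add algebra_simps)
    then show ?thesis using zpow_inv by simp
  qed
  define Gs where "Gs = two_level m Hprime j j' # replicate s (one_level m zz j')"
  have al: "\<forall>G\<in>set Gs. allowed_op m G" unfolding Gs_def using jj allowed_one allowed_H by auto
  define v1 where "v1 = vec m (\<lambda>a. if a = j' then zz^s * v $ a else v $ a)"
  have v1c: "v1 \<in> carrier_vec m" unfolding v1_def by simp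
  have "FF m Gs *\<^sub>v v = two_level m Hprime j j' *\<^sub>v v1"
    unfolding Gs_def v1_def using jj v
    by (subst FF_Cons_vec) (auto simp: two_level_carrier one_level_carrier FF_rep_one)
  also have "\<dots> = vec m (\<lambda>a. if a = j then Hprime$$(0,0) * v1$j + Hprime$$(0,1) * v1$j'
     else if a = j' then Hprime$$(1,0) * v1$j + Hprime$$(1,1) * v1$j' else v1 $ a)"
    using v1c jj by (rule two_level_vec)
  finally have w: "FF m Gs *\<^sub>v v = \<dots>" .
  have v1j: "v1$j = zz^r * e + 2 * y" using jj ry unfolding v1_def by simp
  have v1j': "v1$j' = zz^r * e + 2 * (zz^s * y')" using jj ry' unfolding v1_def
    by (simp add: algebra_simps zs[symmetric])
  have "(FF m Gs *\<^sub>v v)$j = delta * (zz^r * e + y + zz^s * y')"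
    unfolding w Hprime_entries using jj by (simp add: v1j v1j' delta_def field_simps)
  moreover have "(FF m Gs *\<^sub>v v)$j' = delta * (y - zz^s * y')"
    unfolding w Hprime_entries using jj by (simp add: v1j v1j' delta_def field_simps)
  moreover have "\<forall>i<m. i \<noteq> j \<longrightarrow> i \<noteq> j' \<longrightarrow> (FF m Gs *\<^sub>v v)$i = v$i"
    unfolding w v1_def by simp
  moreover have "zz^r * e + y + zz^s * y' \<in> Z" "y - zz^s * y' \<in> Z" using ry ry' e by (auto intro!: Zcl)
  ultimately show ?thesis using al cls0_I by metis
qed

definition SA :: "nat \<Rightarrow> complex vec \<Rightarrow> nat set" where
  "SA m v = {i. i < m \<and> clsE 1 (v$i)}"
definition SB :: "nat \<Rightarrow> complex vec \<Rightarrow> nat set" where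
  "SB m v = {i. i < m \<and> clsE eB (v$i) \<and> \<not> clsE 1 (v$i)}"

lemma eB_Z: "eB \<in> Z" unfolding eB_def by (rule rep_Z)

lemma set_after:
  assumes "\<forall>i<m. i \<noteq> j \<longrightarrow> i \<noteq> j' \<longrightarrow> w$i = v$i" "cls0 (w$j)" "cls0 (w$j')"
    and "\<And>x. P x \<Longrightarrow> \<not> cls0 x"
  shows "{i. i < m \<and> P (w$i)} = {i. i < m \<and> P (v$i)} - {j, j'}"
  using assms by auto

lemma reduce_aux:
  "\<forall>v. v \<in> carrier_vec m \<longrightarrow> (\<forall>i<m. v$i \<in> Z) \<longrightarrow> card (SA m v) + card (SB m v) = n \<longrightarrow>
     even (card (SA m v)) \<longrightarrow> even (card (SB m v)) \<longrightarrow>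
     (\<exists>Gs. (\<forall>G\<in>set Gs. allowed_op m G) \<and> (\<forall>i<m. cls0 ((FF m Gs *\<^sub>v v)$i)))"
proof (induction n rule: less_induct)
  case (less n)
  show ?case
  proof (intro allI impI)
    fix v assume v: "v \<in> carrier_vec m" and vZ: "\<forall>i<m. v$i \<in> Z" and n: "card (SA m v) + card (SB m v) = n"
      and eA: "even (card (SA m v))" and eBv: "even (card (SB m v))"
    have finA: "finite (SA m v)" and finB: "finite (SB m v)" unfolding SA_def SB_def by auto
    have step: "\<exists>Gs. (\<forall>G\<in>set Gs. allowed_op m G) \<and> (\<forall>i<m. cls0 ((FF m Gs *\<^sub>v v)$i))"
      if S: "S = SA m v \<or> S = SB m v" and cS: "card S \<noteq> 0" and eS: "even (card S)"
         and Se: "\<forall>i\<in>S. clsE e (v$i)" and e: "e \<in> Z" for S e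
    proof -
      have finS: "finite S" using S finA finB by auto
      have "card S \<ge> 2" using cS eS by presburger
      then obtain i1 i2 where i12: "i1 \<in> S" "i2 \<in> S" "i1 \<noteq> i2"
        by (metis One_nat_def card_le_Suc0_iff_eq not_less_eq_eq numeral_2_eq_2 finS)
      define j where "j = min i1 i2"
      define j' where "j' = max i1 i2"
      have jj: "j < j'" "j \<in> S" "j' \<in> S" unfolding j_def j'_def using i12 by (auto simp: min_def max_def)
      have Sm: "\<forall>i\<in>S. i < m" using S unfolding SA_def SB_def by auto
      obtain Gs1 where G1: "\<forall>G\<in>set Gs1. allowed_op m G" "cls0 ((FF m Gs1 *\<^sub>v v)$j)" "cls0 ((FF m Gs1 *\<^sub>v v)$j')"
        "\<forall>i<m. i \<noteq> j \<longrightarrow> i \<noteq> j' \<longrightarrow> (FF m Gs1 *\<^sub>v v)$i = v$i"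
        using pair_step[OF v jj(1) _ _ _ e] jj Sm Se by blast
      define w where "w = FF m Gs1 *\<^sub>v v"
      have G1c: "FF m Gs1 \<in> carrier_mat m m" using G1(1) allowed_carrier FF_carrier by blast
      have wc: "w \<in> carrier_vec m" unfolding w_def using G1c v by simp
      have wZ: "\<forall>i<m. w$i \<in> Z"
      proof (intro allI impI)
        fix i assume "i < m"
        show "w$i \<in> Z"
        proof (cases "i = j \<or> i = j'")
          case True then have "cls0 (w$i)" using G1 unfolding w_def by auto
          then show ?thesis unfolding cls0_def using Z_mult Z_delta by auto
        next
          case False then show ?thesis using G1(4) vZ \<open>i < m\<close> unfolding w_def by auto
        qed
      qed
      have nc1: "\<And>x. clsE 1 x \<Longrightarrow> \<not> cls0 x" using cls0_not_clsE by blast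
      have nc2: "\<And>x. clsE eB x \<and> \<not> clsE 1 x \<Longrightarrow> \<not> cls0 x" using cls0_not_clsE by blast
      have SAw: "SA m w = SA m v - {j, j'}"
        unfolding SA_def w_def by (rule set_after[OF G1(4) G1(2) G1(3)]) (rule nc1)
      have SBw: "SB m w = SB m v - {j, j'}"
        unfolding SB_def w_def by (rule set_after[OF G1(4) G1(2) G1(3)]) (rule nc2)
      have cardS: "card (S - {j, j'}) = card S - 2" using jj finS by (subst card_Diff_subset) auto
      have other: "T - {j, j'} = T" if "T = SA m v \<or> T = SB m v" "T \<noteq> S" for T
      proof -
        have "SA m v \<inter> SB m v = {}" unfolding SA_def SB_def by auto
        then have "j \<notin> T" "j' \<notin> T" using that S jj by auto
        then show ?thesis by auto
      qed
      have lt: "card (SA m w) + card (SB m w) < n"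
        and ev: "even (card (SA m w))" "even (card (SB m w))"
        using S
      proof (atomize (full), elim disjE)
        assume SS: "S = SA m v"
        have "SB m v \<noteq> S \<or> SB m v = S" by blast
        then have "SB m w = SB m v"
        proof
          assume "SB m v \<noteq> S"
          then have "SB m v - {j,j'} = SB m v" using other[of "SB m v"] by blast
          then show ?thesis using SBw by simp
        next
          assume h: "SB m v = S"
          have "j \<in> SA m v" "j \<in> SB m v" using SS h jj by auto
          then show ?thesis unfolding SA_def SB_def by blast
        qed
        then show "card (SA m w) + card (SB m w) < n \<and> even (card (SA m w)) \<and> even (card (SB m w))"
          using SAw SS cardS n eS eBv \<open>card S \<ge> 2\<close> by auto
      next
        assume SS: "S = SB m v"
        have "SA m v \<noteq> S \<or> SA m v = S" by blast
        then have "SA m w = SA m v"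
        proof
          assume "SA m v \<noteq> S"
          then have "SA m v - {j,j'} = SA m v" using other[of "SA m v"] by blast
          then show ?thesis using SAw by simp
        next
          assume h: "SA m v = S"
          have "j \<in> SA m v" "j \<in> SB m v" using SS h jj by auto
          then show ?thesis unfolding SA_def SB_def by blast
        qed
        then show "card (SA m w) + card (SB m w) < n \<and> even (card (SA m w)) \<and> even (card (SB m w))"
          using SBw SS cardS n eS eA \<open>card S \<ge> 2\<close> by auto
      qed
      obtain Gs2 where G2: "\<forall>G\<in>set Gs2. allowed_op m G" "\<forall>i<m. cls0 ((FF m Gs2 *\<^sub>v w)$i)"
        using less[OF lt] wc wZ ev by blast
      have "FF m (Gs2 @ Gs1) *\<^sub>v v = FF m Gs2 *\<^sub>v w"
        unfolding w_def using G1(1) G2(1) v allowed_carrier by (intro FF_append) auto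
      then show ?thesis using G1(1) G2 by (intro exI[of _ "Gs2 @ Gs1"]) auto
    qed
    show "\<exists>Gs. (\<forall>G\<in>set Gs. allowed_op m G) \<and> (\<forall>i<m. cls0 ((FF m Gs *\<^sub>v v)$i))"
    proof (cases "card (SA m v) = 0")
      case False
      have hA: "\<forall>i\<in>SA m v. clsE 1 (v$i)" unfolding SA_def by auto
      show ?thesis using step[OF _ False eA hA Z_one] by blast
    next
      case A0: True
      show ?thesis
      proof (cases "card (SB m v) = 0")
        case False
        have hB: "\<forall>i\<in>SB m v. clsE eB (v$i)" unfolding SB_def by auto
        show ?thesis using step[OF _ False eBv hB eB_Z] by blast
      next
        case True
        have "SA m v = {}" "SB m v = {}" using A0 True finA finB by auto
        have "cls0 (v$i)" if "i < m" for i
        proof -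
          have "i \<notin> SA m v" "i \<notin> SB m v" using \<open>SA m v = {}\<close> \<open>SB m v = {}\<close> by auto
          then have "\<not> clsE 1 (v$i)" "\<not> clsE eB (v$i)" using that unfolding SA_def SB_def by auto
          then show ?thesis using Z_class[OF vZ[rule_format, OF that]] by blast
        qed
        then have "\<forall>i<m. cls0 (v$i)" by blast
        moreover have "FF m [] *\<^sub>v v = v" using v by (simp add: FF_def)
        ultimately show ?thesis by (intro exI[of _ "[]"]) auto
      qed
    qed
  qed
qed

lemma Z_sum: "(\<forall>i\<in>A. f i \<in> Z) \<Longrightarrow> sum f A \<in> Z"
  by (induction A rule: infinite_finite_induct) (auto intro: Z_zero Z_add)

lemma delta_cnj: "delta * cnj delta = 2"
  by (simp add: delta_def complex_eq_iff)

lemma cnj_zpow: "cnj (zz^r) = zz^(11*r)"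
  by (simp add: cnj_zeta power_mult)

lemma norm_clsE: assumes "clsE e x" "e \<in> Z" shows "\<exists>W\<in>Z. x * cnj x = e * cnj e + 2 * W"
proof -
  obtain r y where ry: "y \<in> Z" "x = zz^r * e + 2 * y" using assms unfolding clsE_def by blast
  have "x * cnj x = (zz^(11*r) * zz^r) * (e * cnj e) + 2 * (zz^r * e * cnj y + y * zz^(11*r) * cnj e + 2 * y * cnj y)"
    unfolding ry cnj_zpow[symmetric] by (simp add: algebra_simps)
  also have "\<dots> = e * cnj e + 2 * (zz^r * e * cnj y + y * zz^(11*r) * cnj e + 2 * y * cnj y)"
    unfolding zpow_inv by simp
  finally show ?thesis using ry assms(2) Z_cnj by (intro bexI[of _ "zz^r * e * cnj y + y * zz^(11*r) * cnj e + 2 * y * cnj y"]) (auto intro!: Zcl)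
qed

lemma norm_cls0: assumes "cls0 x" shows "\<exists>W\<in>Z. x * cnj x = 2 * W"
proof -
  obtain w where w: "w \<in> Z" "x = delta * w" using assms unfolding cls0_def by blast
  have "x * cnj x = (delta * cnj delta) * (w * cnj w)" unfolding w by (simp add: algebra_simps)
  then have "x * cnj x = 2 * (w * cnj w)" unfolding delta_cnj .
  then show ?thesis using w Z_cnj Z_mult by blast
qed

lemma vec_parity:
  assumes vZ: "\<forall>i<m. v$i \<in> Z" and s: "(\<Sum>i<m. v$i * cnj (v$i)) = 2 * t" and t: "t \<in> Z"
  shows "even (card (SA m v)) \<and> even (card (SB m v))"
proof -
  let ?ind = "\<lambda>i. (if i \<in> SA m v then 1 else 0) + (if i \<in> SB m v then eB * cnj eB else 0)"
  have ex: "\<forall>i. \<exists>W. i < m \<longrightarrow> W \<in> Z \<and> v$i * cnj (v$i) = ?ind i + 2 * W"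
  proof
    fix i
    show "\<exists>W. i < m \<longrightarrow> W \<in> Z \<and> v$i * cnj (v$i) = ?ind i + 2 * W"
    proof (cases "i < m")
      case True
      have disj: "SA m v \<inter> SB m v = {}" unfolding SA_def SB_def by auto
      show ?thesis
      proof (cases "i \<in> SA m v")
        case inA: True
        then have "clsE 1 (v$i)" unfolding SA_def by auto
        then obtain W where "W \<in> Z" "v$i * cnj (v$i) = 1 * cnj 1 + 2 * W" using norm_clsE Z_one by blast
        moreover have "i \<notin> SB m v" using inA disj by auto
        ultimately show ?thesis using inA by auto
      next
        case nA: False
        show ?thesis
        proof (cases "i \<in> SB m v")
          case inB: True
          then have "clsE eB (v$i)" unfolding SB_def by auto
          then obtain W where "W \<in> Z" "v$i * cnj (v$i) = eB * cnj eB + 2 * W" using norm_clsE eB_Z by blast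
          then show ?thesis using inB nA by auto
        next
          case nB: False
          have "\<not> clsE 1 (v$i)" "\<not> clsE eB (v$i)" using nA nB True unfolding SA_def SB_def by auto
          then have "cls0 (v$i)" using Z_class vZ True by blast
          then obtain W where "W \<in> Z" "v$i * cnj (v$i) = 2 * W" using norm_cls0 by blast
          then show ?thesis using nA nB by auto
        qed
      qed
    qed auto
  qed
  then obtain Wf where Wf: "\<forall>i<m. Wf i \<in> Z \<and> v$i * cnj (v$i) = ?ind i + 2 * Wf i" by metis
  have "(\<Sum>i<m. v$i * cnj (v$i)) = (\<Sum>i<m. ?ind i + 2 * Wf i)" using Wf by (intro sum.cong) auto
  also have "\<dots> = (\<Sum>i<m. if i \<in> SA m v then 1 else 0) + (\<Sum>i<m. if i \<in> SB m v then eB * cnj eB else 0) + 2 * (\<Sum>i<m. Wf i)"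
    by (simp add: sum.distrib sum_distrib_left)
  also have "(\<Sum>i<m. if i \<in> SA m v then 1 else (0::complex)) = of_nat (card (SA m v))"
  proof -
    have "(\<Sum>i<m. if i \<in> SA m v then 1 else (0::complex)) = (\<Sum>i\<in>{i\<in>{..<m}. i \<in> SA m v}. 1)"
      by (subst sum.inter_filter) auto
    also have "{i\<in>{..<m}. i \<in> SA m v} = SA m v" unfolding SA_def by auto
    finally show ?thesis by simp
  qed
  also have "(\<Sum>i<m. if i \<in> SB m v then eB * cnj eB else 0) = of_nat (card (SB m v)) * (eB * cnj eB)"
  proof -
    have "(\<Sum>i<m. if i \<in> SB m v then eB * cnj eB else 0) = (\<Sum>i\<in>{i\<in>{..<m}. i \<in> SB m v}. eB * cnj eB)"
      by (subst sum.inter_filter) auto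
    also have "{i\<in>{..<m}. i \<in> SB m v} = SB m v" unfolding SB_def by auto
    finally show ?thesis by simp
  qed
  finally have "of_nat (card (SA m v)) + of_nat (card (SB m v)) * (eB * cnj eB) = 2 * (t - (\<Sum>i<m. Wf i))"
    using s by (simp add: algebra_simps)
  moreover have "t - (\<Sum>i<m. Wf i) \<in> Z" using t Wf by (intro Z_diff Z_sum) auto
  ultimately show ?thesis by (rule parity)
qed

lemma R12_Z: "x \<in> R12 \<Longrightarrow> \<exists>l. delta^l * x \<in> Z"
proof (induction rule: R12.induct)
  case one then show ?case using Z_one by (intro exI[of _ 0]) simp
next
  case half
  have "delta^2 * (1/2) = \<i>" by (simp add: delta_def power2_eq_square complex_eq_iff)
  then show ?case using Z_i by (intro exI[of _ 2]) simp
next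
  case gen then show ?case using Z_gen by (intro exI[of _ 0]) simp
next
  case (add x y)
  then obtain l1 l2 where "delta^l1 * x \<in> Z" "delta^l2 * y \<in> Z" by blast
  moreover have "delta^(l1+l2) * (x + y) = delta^l2 * (delta^l1 * x) + delta^l1 * (delta^l2 * y)"
    by (simp add: power_add algebra_simps)
  ultimately show ?case using Z_pow Z_delta Z_mult Z_add by metis
next
  case (neg x)
  then obtain l where "delta^l * x \<in> Z" by blast
  then show ?case using Z_neg by (intro exI[of _ l]) simp
next
  case (mult x y)
  then obtain l1 l2 where "delta^l1 * x \<in> Z" "delta^l2 * y \<in> Z" by blast
  moreover have "delta^(l1+l2) * (x * y) = (delta^l1 * x) * (delta^l2 * y)"
    by (simp add: power_add algebra_simps)
  ultimately show ?case using Z_mult by metis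
qed

lemma Z_up: "delta^l * x \<in> Z \<Longrightarrow> l \<le> L \<Longrightarrow> delta^L * x \<in> Z"
proof -
  assume h: "delta^l * x \<in> Z" "l \<le> L"
  have "delta^L * x = delta^(L-l) * (delta^l * x)" using h(2) by (simp add: power_add[symmetric] mult.assoc[symmetric])
  then show ?thesis using h Z_mult Z_pow Z_delta by metis
qed

theorem lemma7p4:
  fixes u :: "complex vec" and m :: nat
  assumes "u \<in> carrier_vec m"
    and "\<forall>i < m. u $ i \<in> R12"
    and "is_unit_vector u"
    and "lde u \<ge> 1"
  shows "\<exists>Gs :: complex mat list. (\<forall>G \<in> set Gs. allowed_op m G) \<and>
           lde (foldr (*) Gs (1\<^sub>m m) *\<^sub>v u) < lde u"
proof -
  have dim: "dim_vec u = m" using assms(1) by simp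
  have "\<forall>i<m. \<exists>l. delta^l * u$i \<in> Z" using assms(2) R12_Z by blast
  then obtain f where f: "\<forall>i<m. delta^(f i) * u$i \<in> Z" by metis
  define L where "L = (\<Sum>i<m. f i)"
  have PL: "\<forall>i < dim_vec u. delta ^ L * u $ i \<in> Z"
  proof (intro allI impI)
    fix i assume "i < dim_vec u"
    then have i: "i < m" using dim by simp
    have "f i \<le> L" unfolding L_def using i by (intro member_le_sum) auto
    then show "delta ^ L * u $ i \<in> Z" using f i Z_up by blast
  qed
  define k where "k = lde u"
  have k1: "k \<ge> 1" using assms(4) k_def by simp
  have Pk: "\<forall>i < dim_vec u. delta ^ k * u $ i \<in> Z" unfolding k_def lde_def by (rule LeastI) (rule PL)
  define v where "v = delta^k \<cdot>\<^sub>v u"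
  have vc: "v \<in> carrier_vec m" unfolding v_def using assms(1) by simp
  have vi: "v$i = delta^k * u$i" if "i < m" for i unfolding v_def using that dim by simp
  have vZ: "\<forall>i<m. v$i \<in> Z" using Pk vi dim by simp
  have nrm: "v$i * cnj (v$i) = 2^k * complex_of_real ((cmod (u$i))^2)" if "i < m" for i
  proof -
    have "v$i * cnj (v$i) = (delta * cnj delta)^k * (u$i * cnj (u$i))" unfolding vi[OF that]
      by (simp add: algebra_simps power_mult_distrib)
    then show ?thesis unfolding delta_cnj complex_norm_square .
  qed
  have "(\<Sum>i<m. v$i * cnj (v$i)) = (\<Sum>i<m. 2^k * complex_of_real ((cmod (u$i))^2))"
    using nrm by (intro sum.cong) auto
  also have "\<dots> = 2^k * complex_of_real (\<Sum>i<m. (cmod (u$i))^2)" by (simp add: sum_distrib_left)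
  also have "\<dots> = 2^k" using assms(3) dim unfolding is_unit_vector_def by simp
  also have "\<dots> = 2 * 2^(k-1)" using k1 by (simp add: power_eq_if)
  finally have s: "(\<Sum>i<m. v$i * cnj (v$i)) = 2 * 2^(k-1)" .
  have "2^(k-1) \<in> Z" by (intro Z_pow Z_numeral)
  then have ev: "even (card (SA m v)) \<and> even (card (SB m v))" using vec_parity[OF vZ s] by blast
  obtain Gs where Gs: "\<forall>G\<in>set Gs. allowed_op m G" "\<forall>i<m. cls0 ((FF m Gs *\<^sub>v v)$i)"
    using reduce_aux[rule_format, OF vc _ refl] vZ ev by blast
  have FFc: "FF m Gs \<in> carrier_mat m m" using Gs(1) allowed_carrier FF_carrier by blast
  have FFv: "FF m Gs *\<^sub>v v = delta^k \<cdot>\<^sub>v (FF m Gs *\<^sub>v u)"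
    unfolding v_def using FFc assms(1) by (rule mult_mat_vec)
  have dz: "delta \<noteq> 0" by (simp add: delta_def complex_eq_iff)
  have P': "\<forall>i < dim_vec (FF m Gs *\<^sub>v u). delta ^ (k-1) * (FF m Gs *\<^sub>v u) $ i \<in> Z"
  proof (intro allI impI)
    fix i assume "i < dim_vec (FF m Gs *\<^sub>v u)"
    then have i: "i < m" using FFc by simp
    obtain w where w: "w \<in> Z" "(FF m Gs *\<^sub>v v)$i = delta * w" using Gs(2) i unfolding cls0_def by blast
    have "(FF m Gs *\<^sub>v v)$i = delta^k * (FF m Gs *\<^sub>v u)$i" unfolding FFv using i FFc by simp
    also have "\<dots> = delta * (delta^(k-1) * (FF m Gs *\<^sub>v u)$i)"
    proof -
      have "delta^k = delta * delta^(k-1)" using k1 by (simp add: power_eq_if)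
      then show ?thesis by (simp add: mult.assoc)
    qed
    finally have "delta^(k-1) * (FF m Gs *\<^sub>v u)$i = w" using w dz by simp
    then show "delta ^ (k-1) * (FF m Gs *\<^sub>v u) $ i \<in> Z" using w by simp
  qed
  have "lde (FF m Gs *\<^sub>v u) \<le> k - 1" unfolding lde_def by (rule Least_le) (rule P')
  then have "lde (FF m Gs *\<^sub>v u) < lde u" using k1 k_def by simp
  then show ?thesis using Gs(1) unfolding FF_def by blast
qed

end
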